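(* Let $A\in\mathbb{R}^{n\times d}$, $b\in\mathbb{R}^n$, and suppose $Ax=b$ admits a solution $x^*$. Let $\lbrace W_1,\ldots,W_N\rbrace\subset\mathbb{R}^n$ and let $w$ be a random variable with $\mathbb{P}[w=W_j]>0$ for $j=1,\ldots,N$ and $\sum_j\mathbb{P}[w=W_j]=1$. Let $\lbrace w_\ell:\ell\geq0\rbrace$ be sampled from $\lbrace W_1,\ldots,W_N\rbrace$ without replacement, the set being repopulated with its original elements once exhausted and sampling without replacement repeated. Let $\mathcal{N}(w) = \mathrm{span}\lbrace z\in\mathbb{R}^d:\mathbb{P}[z'A'w=0]=1\rbrace$, $\mathcal{R}(w) = \mathcal{N}(w)^\perp$; let $x_0\in\mathbb{R}^d$ be arbitrary and $x_{k+1} = x_k + A'w_kw_k'(b-Ax_k)/\|A'w_k\|_2^2$. Define $\tau_0=0$, $\tau_1=\min\lbrace k\geq0:\mathrm{span}\lbrace A'w_0,\ldots,A'w_k\rbrace=\mathcal{R}(w)\rbrace$, and for $\ell\geq2$, $\tau_\ell=\min\lbrace k>\tau_{\ell-1}:\mathrm{span}\lbrace A'w_{\tau_{\ell-1}+1},\ldots,A'w_k\rbrace=\mathcal{R}(w)\rbrace$ if $\tau_{\ell-1}<\infty$, else $\infty$; let $\mathcal{F}_\ell$ be the set of matrices whose columns form a maximal linearly independent subset of $\lbrace A'w_{\tau_{\ell-1}+1}/\|A'w_{\tau_{\ell-1}+1}\|_2,\ldots,A'w_{\tau_\ell}/\|A'w_{\tau_\ell}\|_2\rbrace$ and $\gamma_\ell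 = 1-\min_{F\in\mathcal{F}_\ell}\det(F'F)$. Then (1) $\tau_\ell - \tau_{\ell-1}\leq 2N$ for all $\ell\in\mathbb{N}$, and (2) $\lim_{\ell\to\infty}\prod_{j=1}^\ell\gamma_j = 0$. Moreover, the $\gamma_j$ are uniformly bounded by some $\gamma\in[0,1)$ that depends on $\lbrace A'W_1,\ldots,A'W_N\rbrace$, and therefore, with probability one, $$\|x_{2N\ell} - x^* - P_{\mathcal{N}(w)}(x_0-x^* )\|_2^2 \leq \gamma^\ell\|P_{\mathcal{R}(w)}(x_0-x^* )\|_2^2.$$
   Context: $P_W$ is orthogonal projection onto $W$; $A'$ is the transpose. The iteration presupposes $A'w_k\neq0$. *)

theory Defs
  imports "HOL-Probability.Probability"
begin

definition nullsp :: "real^'d^'n \<Rightarrow> (real^'n) pmf \<Rightarrow> (real^'d) set" where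
  "nullsp A w = span {z. measure_pmf.prob w {v. z \<bullet> (transpose A *v v) = 0} = 1}"

definition orth_comp :: "'a::real_inner set \<Rightarrow> 'a set" where
  "orth_comp S = {y. \<forall>z\<in>S. y \<bullet> z = 0}"

definition proj :: "'a::real_inner set \<Rightarrow> 'a \<Rightarrow> 'a" where
  "proj S x = (THE p. p \<in> S \<and> (\<forall>y\<in>S. (x - p) \<bullet> y = 0))"

text \<open>Sampling without replacement with repopulation: every consecutive block of
  N samples is an enumeration of the N-element set W.\<close>
definition block_perm :: "nat \<Rightarrow> 'a set \<Rightarrow> (nat \<Rightarrow> 'a) \<Rightarrow> bool" where
  "block_perm N W ws = (\<forall>k. bij_betw (\<lambda>i. ws (k * N + i)) {..<N} W)"

primrec kacz :: "real^'d^'n \<Rightarrow> real^'n \<Rightarrow> (nat \<Rightarrow> real^'n) \<Rightarrow> real^'d \<Rightarrow> nat \<Rightarrow> real^'d" where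
  "kacz A b ws x0 0 = x0"
| "kacz A b ws x0 (Suc k) =
     kacz A b ws x0 k + ((ws k \<bullet> (b - A *v kacz A b ws x0 k)) / (norm (transpose A *v ws k))^2)
        *\<^sub>R (transpose A *v ws k)"

definition spans_from :: "real^'d^'n \<Rightarrow> (nat \<Rightarrow> real^'n) \<Rightarrow> (real^'d) set \<Rightarrow> nat \<Rightarrow> nat \<Rightarrow> bool" where
  "spans_from A ws R s k = (span ((\<lambda>i. transpose A *v ws i) ` {s..k}) = R)"

fun tau :: "real^'d^'n \<Rightarrow> (nat \<Rightarrow> real^'n) \<Rightarrow> (real^'d) set \<Rightarrow> nat \<Rightarrow> enat" where
  "tau A ws R 0 = 0"
| "tau A ws R (Suc 0) =
     (if \<exists>k. spans_from A ws R 0 k then enat (LEAST k. spans_from A ws R 0 k) else \<infinity>)"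
| "tau A ws R (Suc (Suc l)) =
     (case tau A ws R (Suc l) of
        \<infinity> \<Rightarrow> \<infinity>
      | enat t \<Rightarrow> (if \<exists>k>t. spans_from A ws R (Suc t) k
                   then enat (LEAST k. t < k \<and> spans_from A ws R (Suc t) k) else \<infinity>))"

text \<open>Normalized vectors A'w_i / norm(A'w_i) of the l-th block (for l = 1 the block starts
  at index 0, as in the definition of tau_1).\<close>
definition normcols :: "real^'d^'n \<Rightarrow> (nat \<Rightarrow> real^'n) \<Rightarrow> (real^'d) set \<Rightarrow> nat \<Rightarrow> (real^'d) set" where
  "normcols A ws R l =
     (let s = (if l = 1 then 0 else Suc (the_enat (tau A ws R (l - 1)))) in
      (\<lambda>i. (1 / norm (transpose A *v ws i)) *\<^sub>R (transpose A *v ws i)) `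
        {i. s \<le> i \<and> enat i \<le> tau A ws R l})"

text \<open>det(F'F) for the matrix F with columns vs: Leibniz formula for the Gram matrix.\<close>
definition gram_det :: "'a::real_inner list \<Rightarrow> real" where
  "gram_det vs = (\<Sum>p\<in>{p. p permutes {..<length vs}}.
      of_int (sign p) * (\<Prod>i<length vs. vs ! i \<bullet> vs ! (p i)))"

text \<open>Matrices (as lists of columns) whose columns form a maximal linearly independent subset of S.\<close>
definition Fmats :: "'a::real_vector set \<Rightarrow> 'a list set" where
  "Fmats S = {vs. distinct vs \<and> set vs \<subseteq> S \<and> independent (set vs) \<and>
                 (\<forall>T. set vs \<subseteq> T \<and> T \<subseteq> S \<and> independent T \<longrightarrow> T = set vs)}"

definition gamma :: "real^'d^'n \<Rightarrow> (nat \<Rightarrow> real^'n) \<Rightarrow> (real^'d) set \<Rightarrow> nat \<Rightarrow> real" where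
  "gamma A ws R l = 1 - Min (gram_det ` Fmats (normcols A ws R l))"

end

theory Submission
  imports Defs "Jordan_Normal_Form.Determinant"
begin

no_notation Matrix.scalar_prod (infix \<open>\<bullet>\<close> 70)

definition Gmat :: "'a::real_inner list \<Rightarrow> real mat" where
  "Gmat xs = mat (length xs) (length xs) (\<lambda>(i,j). xs!i \<bullet> xs!j)"

lemma gram_det_Gmat: "gram_det vs = Determinant.det (Gmat vs)"
  unfolding gram_det_def Determinant.det_def Gmat_def by (simp add: atLeast0LessThan)

lemma Gmat_transform:
  fixes xs ys :: "'a::real_inner list"
  assumes "length xs = m" "length ys = m" "E \<in> carrier_mat m m"
    and "\<forall>i<m. xs!i = (\<Sum>k<m. E$$(i,k) *\<^sub>R ys!k)"
  shows "Gmat xs = E * Gmat ys * transpose_mat E"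
proof (rule eq_matI)
  show "dim_row (Gmat xs) = dim_row (E * Gmat ys * transpose_mat E)"
    using assms by (simp add: Gmat_def)
  show "dim_col (Gmat xs) = dim_col (E * Gmat ys * transpose_mat E)"
    using assms by (simp add: Gmat_def)
  fix i j assume i: "i < dim_row (E * Gmat ys * transpose_mat E)" and j: "j < dim_col (E * Gmat ys * transpose_mat E)"
  hence im: "i < m" and jm: "j < m" using assms by auto
  have "Gmat xs $$ (i,j) = xs!i \<bullet> xs!j" using im jm assms by (simp add: Gmat_def)
  also have "\<dots> = (\<Sum>k<m. \<Sum>l<m. E$$(i,k) * E$$(j,l) * (ys!k \<bullet> ys!l))"
    using assms(4) im jm
    apply (simp add: inner_sum_left inner_sum_right sum_distrib_left mult.assoc)
    apply (subst sum.swap)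
    apply (simp add: mult_ac inner_commute)
    done
  also have "\<dots> = (\<Sum>l<m. (\<Sum>k<m. E$$(i,k) * (ys!k \<bullet> ys!l)) * E$$(j,l))"
    by (simp add: sum_distrib_left sum_distrib_right mult_ac) (rule sum.swap)
  also have "\<dots> = (E * Gmat ys * transpose_mat E) $$ (i,j)"
    using assms im jm
    by (simp add: Gmat_def scalar_prod_def atLeast0LessThan)
  finally show "Gmat xs $$ (i,j) = (E * Gmat ys * transpose_mat E) $$ (i,j)" .
qed


lemma span_list_sum:
  fixes vs :: "'a::real_vector list"
  assumes "p \<in> span (set vs)"
  shows "\<exists>c. p = (\<Sum>k<length vs. c k *\<^sub>R vs!k)"
  using assms
proof (induction vs arbitrary: p)
  case Nil
  then show ?case by simp
next
  case (Cons a vs)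
  from Cons.prems obtain t where "p - t *\<^sub>R a \<in> span (set vs)"
    by (auto simp: span_insert)
  from Cons.IH[OF this] obtain c where c: "p - t *\<^sub>R a = (\<Sum>k<length vs. c k *\<^sub>R vs!k)" by blast
  let ?c = "\<lambda>k. if k = 0 then t else c (k - 1)"
  have "(\<Sum>k<length (a#vs). ?c k *\<^sub>R (a#vs)!k) = t *\<^sub>R a + (\<Sum>k<length vs. c k *\<^sub>R vs!k)"
    unfolding length_Cons sum.lessThan_Suc_shift by simp
  with c have pc: "p = (\<Sum>k<length (a#vs). ?c k *\<^sub>R (a#vs)!k)" by (simp add: algebra_simps)
  show ?case apply (rule exI[where x="?c"]) using pc by simp
qed

lemma Gmat_orth_cons:
  fixes w :: "'a::real_inner"
  assumes "\<forall>x\<in>set vs. w \<bullet> x = 0"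
  shows "Determinant.det (Gmat (w # vs)) = (w \<bullet> w) * Determinant.det (Gmat vs)"
proof -
  let ?n = "length vs"
  have eq: "Gmat (w # vs) = four_block_mat (mat 1 1 (\<lambda>_. w \<bullet> w)) (0\<^sub>m 1 ?n) (0\<^sub>m ?n 1) (Gmat vs)"
  proof (rule eq_matI)
    fix i j assume "i < dim_row (four_block_mat (mat 1 1 (\<lambda>_. w \<bullet> w)) (0\<^sub>m 1 ?n) (0\<^sub>m ?n 1) (Gmat vs))"
      "j < dim_col (four_block_mat (mat 1 1 (\<lambda>_. w \<bullet> w)) (0\<^sub>m 1 ?n) (0\<^sub>m ?n 1) (Gmat vs))"
    then show "Gmat (w # vs) $$ (i, j) = four_block_mat (mat 1 1 (\<lambda>_. w \<bullet> w)) (0\<^sub>m 1 ?n) (0\<^sub>m ?n 1) (Gmat vs) $$ (i, j)"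
      using assms by (cases i; cases j) (auto simp: Gmat_def inner_commute)
  qed (auto simp: Gmat_def)
  have d1: "Determinant.det (mat 1 1 (\<lambda>_. w \<bullet> w)) = w \<bullet> w"
    by (subst det_upper_triangular[of _ 1]) (auto simp: diag_mat_def upper_triangular_def)
  have "Determinant.det (four_block_mat (mat 1 1 (\<lambda>_. w \<bullet> w)) (0\<^sub>m 1 ?n) (0\<^sub>m ?n 1) (Gmat vs))
     = Determinant.det (mat 1 1 (\<lambda>_. w \<bullet> w)) * Determinant.det (Gmat vs)"
    by (rule det_four_block_mat_lower_left_zero_col) (auto simp: Gmat_def)
  with d1 show ?thesis unfolding eq by simp
qed

lemma gram_det_cons:
  fixes v p :: "'a::real_inner"
  assumes orth: "\<forall>x\<in>set vs. (v - p) \<bullet> x = 0" and p: "p \<in> span (set vs)"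
  shows "gram_det (v # vs) = (norm (v - p))^2 * gram_det vs"
proof -
  let ?n = "length vs"
  let ?m = "Suc ?n"
  obtain c where c: "p = (\<Sum>k<?n. c k *\<^sub>R vs!k)" using span_list_sum[OF p] by blast
  define E :: "real mat" where "E = mat ?m ?m (\<lambda>(i,j). if i = j then 1 else if i = 0 then c (j - 1) else 0)"
  have Ec: "E \<in> carrier_mat ?m ?m" by (simp add: E_def)
  have rep: "\<forall>i<?m. (v#vs)!i = (\<Sum>k<?m. E$$(i,k) *\<^sub>R ((v-p)#vs)!k)"
  proof (intro allI impI)
    fix i assume i: "i < ?m"
    show "(v#vs)!i = (\<Sum>k<?m. E$$(i,k) *\<^sub>R ((v-p)#vs)!k)"
    proof (cases i)
      case 0
      have "(\<Sum>k<?m. E$$(i,k) *\<^sub>R ((v-p)#vs)!k) = (v - p) + (\<Sum>k<?n. c k *\<^sub>R vs!k)"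
        using 0 unfolding sum.lessThan_Suc_shift by (simp add: E_def)
      then show ?thesis using 0 c by simp
    next
      case (Suc i')
      have "(\<Sum>k<?m. E$$(i,k) *\<^sub>R ((v-p)#vs)!k) = (\<Sum>k<?n. (if k = i' then vs!k else 0))"
      proof -
        have e: "\<And>k. k < ?n \<Longrightarrow> E$$(i, Suc k) = (if k = i' then 1 else 0)"
          using Suc i by (simp add: E_def)
        have "(\<Sum>k<?m. E$$(i,k) *\<^sub>R ((v-p)#vs)!k) = (\<Sum>k<?n. E$$(i,Suc k) *\<^sub>R vs!k)"
          using Suc i unfolding sum.lessThan_Suc_shift by (simp add: E_def)
        also have "\<dots> = (\<Sum>k<?n. (if k = i' then vs!k else 0))"
          by (rule sum.cong) (auto simp: e)
        finally show ?thesis .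
      qed
      also have "\<dots> = vs ! i'" using Suc i by (simp add: sum.delta)
      finally show ?thesis using Suc by simp
    qed
  qed
  have G: "Gmat (v#vs) = E * Gmat ((v-p)#vs) * transpose_mat E"
    by (rule Gmat_transform[OF _ _ Ec rep]) auto
  have dg: "diag_mat E = replicate ?m 1"
    by (rule nth_equalityI) (auto simp: diag_mat_def E_def simp del: upt_Suc replicate_Suc)
  have dE: "Determinant.det E = 1"
  proof -
    have ut: "upper_triangular E" by (auto simp: E_def upper_triangular_def)
    show ?thesis using det_upper_triangular[OF ut Ec] dg by simp
  qed
  have GC: "Gmat ((v-p)#vs) \<in> carrier_mat ?m ?m" by (simp add: Gmat_def)
  have "gram_det (v # vs) = Determinant.det E * Determinant.det (Gmat ((v-p)#vs)) * Determinant.det (transpose_mat E)"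
  proof -
    have EG: "E * Gmat ((v-p)#vs) \<in> carrier_mat ?m ?m" using Ec GC by simp
    have ET: "transpose_mat E \<in> carrier_mat ?m ?m" using Ec by simp
    show ?thesis unfolding gram_det_Gmat G det_mult[OF EG ET] det_mult[OF Ec GC] ..
  qed
  also have "\<dots> = Determinant.det (Gmat ((v-p)#vs))" using dE det_transpose[OF Ec] by simp
  also have "\<dots> = (norm (v - p))^2 * gram_det vs"
    using Gmat_orth_cons[OF orth] by (simp add: gram_det_Gmat power2_norm_eq_inner)
  finally show ?thesis .
qed


fun sweep :: "'a::real_inner list \<Rightarrow> 'a \<Rightarrow> 'a" where
  "sweep [] y = y"
| "sweep (u#us) y = sweep us (y - (u \<bullet> y) *\<^sub>R u)"

fun greedy :: "'a::real_vector list \<Rightarrow> 'a list" where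
  "greedy [] = []"
| "greedy (u#us) = (if u \<in> span (set us) then greedy us else u # greedy us)"

lemma greedy_subset: "set (greedy us) \<subseteq> set us"
  by (induction us) auto

lemma greedy_span: "span (set (greedy us)) = span (set us)"
proof (induction us)
  case (Cons u us)
  show ?case
  proof (cases "u \<in> span (set us)")
    case True
    then show ?thesis using Cons by (simp add: span_redundant)
  next
    case False
    then show ?thesis using Cons by (simp add: span_insert)
  qed
qed simp

lemma greedy_indep: "independent (set (greedy us)) \<and> distinct (greedy us)"
proof (induction us)
  case (Cons u us)
  have "u \<notin> set (greedy us)" if "u \<notin> span (set us)"
    using that greedy_subset span_base by blast
  then show ?case using Cons greedy_span[of us]
    by (auto simp: independent_insert)
qed (simp add: independent_empty)

lemma sweep_append: "sweep (us @ vs) y = sweep vs (sweep us y)"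
  by (induction us arbitrary: y) auto

lemma sweep_span: "set us \<subseteq> span X \<Longrightarrow> y \<in> span X \<Longrightarrow> sweep us y \<in> span X"
  by (induction us arbitrary: y) (auto intro!: span_diff span_mul)

lemma sweep_add_orth:
  "\<forall>u\<in>set us. u \<bullet> c = 0 \<Longrightarrow> sweep us (a + c) = sweep us a + c"
proof (induction us arbitrary: a)
  case (Cons u us)
  have eq: "a + c - (u \<bullet> (a + c)) *\<^sub>R u = (a - (u \<bullet> a) *\<^sub>R u) + c"
    using Cons.prems by (simp add: inner_add_right algebra_simps)
  have "sweep (u#us) (a + c) = sweep us ((a - (u \<bullet> a) *\<^sub>R u) + c)" unfolding sweep.simps(2) eq ..
  also have "\<dots> = sweep us (a - (u \<bullet> a) *\<^sub>R u) + c"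
    by (rule Cons.IH) (use Cons.prems in auto)
  finally show ?case by simp
qed simp

lemma step_norm:
  fixes u y :: "'a::real_inner"
  assumes "norm u = 1"
  shows "(norm (y - (u \<bullet> y) *\<^sub>R u))^2 = (norm y)^2 - (u \<bullet> y)^2"
proof -
  have uu: "u \<bullet> u = 1" using assms by (simp add: norm_eq_1)
  show ?thesis unfolding power2_norm_eq_inner
    by (simp add: inner_diff_left inner_diff_right uu inner_commute power2_eq_square)
qed

lemma sweep_norm_le:
  assumes "\<forall>u\<in>set us. norm u = 1"
  shows "norm (sweep us y) \<le> norm y"
  using assms
proof (induction us arbitrary: y)
  case (Cons u us)
  have nu: "norm u = 1" using Cons.prems by simp
  have "(norm (y - (u \<bullet> y) *\<^sub>R u))^2 \<le> (norm y)^2"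
    unfolding step_norm[OF nu] using zero_le_power2[of "u \<bullet> y"] by linarith
  hence le: "norm (y - (u \<bullet> y) *\<^sub>R u) \<le> norm y" by (rule power2_le_imp_le) simp
  have "norm (sweep us (y - (u \<bullet> y) *\<^sub>R u)) \<le> norm (y - (u \<bullet> y) *\<^sub>R u)"
    using Cons.IH Cons.prems by simp
  then show ?case using le by simp
qed simp

lemma orth_decomp:
  fixes v :: "'a::euclidean_space"
  obtains p where "p \<in> span S" "\<forall>x\<in>span S. (v - p) \<bullet> x = 0"
proof -
  obtain y z where "y \<in> span S" "\<And>w. w \<in> span S \<Longrightarrow> real_inner_class.orthogonal z w" "v = y + z"
    using orthogonal_subspace_decomp_exists[of S v] by blast
  then show ?thesis using that[of y] by (auto simp: real_inner_class.orthogonal_def)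
qed

lemma gram_det_bounds:
  fixes vs :: "'a::euclidean_space list"
  assumes "independent (set vs)" "distinct vs" "\<forall>v\<in>set vs. norm v = 1"
  shows "0 < gram_det vs \<and> gram_det vs \<le> 1"
  using assms
proof (induction vs)
  case Nil
  have "{p. p permutes {..<0::nat}} = {id}" by (auto simp: permutes_empty)
  then show ?case by (simp add: gram_det_def)
next
  case (Cons v vs)
  obtain p where p: "p \<in> span (set vs)" "\<forall>x\<in>span (set vs). (v - p) \<bullet> x = 0"
    using orth_decomp by blast
  have ind: "independent (set vs)" "v \<notin> span (set vs)"
    using Cons.prems by (auto simp: independent_insert)
  have IH: "0 < gram_det vs \<and> gram_det vs \<le> 1" using Cons ind by auto
  have eq: "gram_det (v # vs) = (norm (v - p))^2 * gram_det vs"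
    by (rule gram_det_cons) (use p span_base in auto)
  have "v - p \<noteq> 0" using p(1) ind(2) by auto
  hence pos: "(norm (v - p))^2 > 0" by simp
  have "(v - p) \<bullet> p = 0" using p by auto
  hence "(norm v)^2 = (norm (v - p))^2 + (norm p)^2"
    using norm_add_Pythagorean[of "v - p" p] by (simp add: real_inner_class.orthogonal_def)
  moreover have "(norm v)^2 = 1" using Cons.prems by simp
  ultimately have le1: "(norm (v - p))^2 \<le> 1" using zero_le_power2[of "norm p"] by linarith
  have "(norm (v - p))^2 * gram_det vs > 0" using IH pos by simp
  moreover have "(norm (v - p))^2 * gram_det vs \<le> 1"
    using mult_le_one[of "(norm (v - p))^2" "gram_det vs"] IH le1 by simp
  ultimately show ?case using eq by simp
qed


lemma orth_span:
  fixes s :: "'a::real_inner"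
  assumes "\<forall>x\<in>S. s \<bullet> x = 0" "a \<in> span S"
  shows "s \<bullet> a = 0"
  using orthogonal_to_span[of a S s] assms by (auto simp: real_inner_class.orthogonal_def)

lemma greedy_bounds:
  fixes us :: "'a::euclidean_space list"
  assumes "\<forall>u\<in>set us. norm u = 1"
  shows "0 < gram_det (greedy us) \<and> gram_det (greedy us) \<le> 1"
proof -
  have "\<forall>v\<in>set (greedy us). norm v = 1" using assms greedy_subset[of us] by blast
  then show ?thesis using gram_det_bounds[of "greedy us"] greedy_indep[of us] by blast
qed

lemma sweep_bound:
  fixes us :: "'a::euclidean_space list"
  assumes "\<forall>u\<in>set us. norm u = 1" "y \<in> span (set us)"
  shows "(norm (sweep us y))^2 \<le> (1 - gram_det (greedy us)) * (norm y)^2"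
  using assms
proof (induction us arbitrary: y)
  case Nil
  then show ?case by simp
next
  case (Cons u us)
  have nu: "norm u = 1" and nus: "\<forall>u\<in>set us. norm u = 1" using Cons.prems by auto
  have uu: "u \<bullet> u = 1" using nu by (simp add: norm_eq_1)
  have Dg: "0 < gram_det (greedy us) \<and> gram_det (greedy us) \<le> 1"
    using greedy_bounds[OF nus] .
  define z where "z = y - (u \<bullet> y) *\<^sub>R u"
  have zy: "(norm z)^2 \<le> (norm y)^2"
    unfolding z_def step_norm[OF nu] using zero_le_power2[of "u \<bullet> y"] by linarith
  have "z \<bullet> u = y \<bullet> u - (u \<bullet> y) * (u \<bullet> u)" by (simp add: z_def inner_diff_left)
  hence zu: "z \<bullet> u = 0" using uu by (simp add: inner_commute)
  have zK: "z \<in> span (insert u (set us))"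
  proof -
    have "u \<in> span (insert u (set us))" by (simp add: span_base)
    then show ?thesis unfolding z_def using Cons.prems(2) by (simp add: span_diff span_scale)
  qed
  have sw: "sweep (u#us) y = sweep us z" by (simp add: z_def)
  show ?case
  proof (cases "u \<in> span (set us)")
    case True
    have g: "greedy (u#us) = greedy us" using True by simp
    have "z \<in> span (set us)" using zK True by (simp add: span_redundant)
    hence "(norm (sweep us z))^2 \<le> (1 - gram_det (greedy us)) * (norm z)^2"
      using Cons.IH nus by blast
    also have "\<dots> \<le> (1 - gram_det (greedy us)) * (norm y)^2"
      using zy Dg by (intro mult_left_mono) auto
    finally show ?thesis using sw g by simp
  next
    case False
    have g: "greedy (u#us) = u # greedy us" using False by simp
    define D' where "D' = gram_det (greedy us)"
    obtain q where q: "q \<in> span (set us)" "\<forall>x\<in>span (set us). (u - q) \<bullet> x = 0"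
      using orth_decomp by blast
    define s where "s = u - q"
    define \<delta> where "\<delta> = (norm s)^2"
    have sq: "\<forall>x\<in>span (set us). s \<bullet> x = 0" using q(2) by (simp add: s_def)
    have D: "gram_det (greedy (u#us)) = \<delta> * D'"
      unfolding g \<delta>_def D'_def s_def
      by (rule gram_det_cons) (use q greedy_span[of us] greedy_subset[of us] span_base in blast)+
    have Dle: "\<delta> * D' \<le> 1" and D'pos: "0 \<le> D'"
    proof -
      have "0 < gram_det (greedy (u#us)) \<and> gram_det (greedy (u#us)) \<le> 1"
        using greedy_bounds[OF Cons.prems(1)] .
      then show "\<delta> * D' \<le> 1" using D by simp
      show "0 \<le> D'" using Dg D'_def by simp
    qed
    obtain a where a: "a \<in> span (set us)" "\<forall>x\<in>span (set us). (z - a) \<bullet> x = 0"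
      using orth_decomp by blast
    define c where "c = z - a"
    have cq: "\<forall>x\<in>span (set us). c \<bullet> x = 0" using a(2) by (simp add: c_def)
    have zac: "z = a + c" by (simp add: c_def)
    have sweq: "sweep us z = sweep us a + c"
      unfolding zac by (rule sweep_add_orth) (use cq span_base in \<open>auto simp: inner_commute\<close>)
    have swa: "sweep us a \<in> span (set us)" by (rule sweep_span) (use a span_base in auto)
    have n1: "(norm (sweep us z))^2 = (norm (sweep us a))^2 + (norm c)^2"
      unfolding sweq using norm_add_Pythagorean[of "sweep us a" c] cq swa
      by (simp add: real_inner_class.orthogonal_def inner_commute)
    have n2: "(norm z)^2 = (norm a)^2 + (norm c)^2"
      unfolding zac using norm_add_Pythagorean[of a c] cq a(1)
      by (simp add: real_inner_class.orthogonal_def inner_commute)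
    have IH: "(norm (sweep us a))^2 \<le> (1 - D') * (norm a)^2"
      using Cons.IH[OF nus a(1)] D'_def by simp
    have cK: "c \<in> span (insert u (set us))"
      unfolding c_def using zK a(1) by (meson span_diff span_mono subset_insertI subsetD)
    then obtain \<alpha> where \<alpha>: "c - \<alpha> *\<^sub>R u \<in> span (set us)" by (auto simp: span_insert)
    have ceq: "c - \<alpha> *\<^sub>R s = (c - \<alpha> *\<^sub>R u) + \<alpha> *\<^sub>R q" by (simp add: s_def algebra_simps)
    have "(c - \<alpha> *\<^sub>R u) + \<alpha> *\<^sub>R q \<in> span (set us)"
      using \<alpha> q(1) by (intro span_add span_scale)
    hence inK: "c - \<alpha> *\<^sub>R s \<in> span (set us)" unfolding ceq .
    have "(c - \<alpha> *\<^sub>R s) \<bullet> (c - \<alpha> *\<^sub>R s) = c \<bullet> (c - \<alpha> *\<^sub>R s) - \<alpha> * (s \<bullet> (c - \<alpha> *\<^sub>R s))"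
      by (simp add: inner_diff_left)
    also have "\<dots> = 0" using cq sq inK by simp
    finally have cs: "c = \<alpha> *\<^sub>R s" by simp
    have sq0: "s \<bullet> q = 0" using sq q(1) by simp
    have as0: "a \<bullet> s = 0" using sq a(1) by (simp add: inner_commute)
    have "0 = z \<bullet> u" using zu by simp
    also have "\<dots> = (a + \<alpha> *\<^sub>R s) \<bullet> (q + s)" using zac cs by (simp add: s_def)
    also have "\<dots> = a \<bullet> q + \<alpha> * \<delta>"
      using sq0 as0 by (simp add: inner_add_left inner_add_right \<delta>_def power2_norm_eq_inner inner_commute)
    finally have aq: "a \<bullet> q = - \<alpha> * \<delta>" by simp
    have "(norm u)^2 = (norm q)^2 + (norm s)^2"
      using norm_add_Pythagorean[of q s] sq0 by (simp add: real_inner_class.orthogonal_def s_def inner_commute)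
    hence nq: "(norm q)^2 = 1 - \<delta>" using nu \<delta>_def by simp
    have "(a \<bullet> q)^2 \<le> (norm a)^2 * (norm q)^2"
    proof -
      have "\<bar>a \<bullet> q\<bar> \<le> norm a * norm q" by (rule Cauchy_Schwarz_ineq2)
      hence "\<bar>a \<bullet> q\<bar>^2 \<le> (norm a * norm q)^2" by (rule power_mono) simp
      then show ?thesis by (simp add: power_mult_distrib)
    qed
    hence key0: "\<alpha>^2 * \<delta>^2 \<le> (norm a)^2 * (1 - \<delta>)" using aq nq by (simp add: power_mult_distrib)
    have nc: "(norm c)^2 = \<alpha>^2 * \<delta>" using cs \<delta>_def by (simp add: power_mult_distrib)
    have key: "\<delta> * (norm z)^2 \<le> (norm a)^2"
    proof -
      have "\<delta> * (norm c)^2 = \<alpha>^2 * \<delta>^2" using nc by (simp add: power2_eq_square)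
      hence "\<delta> * (norm c)^2 \<le> (norm a)^2 * (1 - \<delta>)" using key0 by simp
      then show ?thesis using n2 by (simp add: algebra_simps)
    qed
    have k2: "D' * (\<delta> * (norm z)^2) \<le> D' * (norm a)^2"
      using key D'pos by (rule mult_left_mono)
    have "(norm (sweep us z))^2 \<le> (1 - \<delta> * D') * (norm z)^2"
      using n1 n2 IH k2 by (simp add: algebra_simps)
    also have "\<dots> \<le> (1 - \<delta> * D') * (norm y)^2"
      using zy Dle by (intro mult_left_mono) auto
    finally show ?thesis using sw D by simp
  qed
qed


lemma proj_unique:
  fixes x :: "'a::real_inner"
  assumes "subspace S" "p \<in> S" "\<forall>y\<in>S. (x - p) \<bullet> y = 0"
  shows "proj S x = p"
  unfolding proj_def
proof (rule the_equality)
  show "p \<in> S \<and> (\<forall>y\<in>S. (x - p) \<bullet> y = 0)" using assms by simp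
  fix p' assume h: "p' \<in> S \<and> (\<forall>y\<in>S. (x - p') \<bullet> y = 0)"
  have d: "p' - p \<in> S" using subspace_diff[OF assms(1)] assms(2) h by blast
  have "(p' - p) \<bullet> (p' - p) = (x - p) \<bullet> (p' - p) - (x - p') \<bullet> (p' - p)"
    by (simp add: inner_diff_left)
  also have "\<dots> = 0" using assms(3) h d by simp
  finally show "p' = p" by simp
qed

lemma greedy_Fmats: "greedy us \<in> Fmats (set us)"
  unfolding Fmats_def
proof (intro CollectI conjI allI impI)
  show "distinct (greedy us)" "independent (set (greedy us))" using greedy_indep by blast+
  show "set (greedy us) \<subseteq> set us" by (rule greedy_subset)
  fix T assume T: "set (greedy us) \<subseteq> T \<and> T \<subseteq> set us \<and> independent T"
  show "T = set (greedy us)"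
  proof (rule ccontr)
    assume "T \<noteq> set (greedy us)"
    then obtain x where x: "x \<in> T" "x \<notin> set (greedy us)" using T by blast
    have "x \<in> span (set us)" using x T span_base by blast
    hence "x \<in> span (set (greedy us))" using greedy_span by blast
    moreover have "span (set (greedy us)) \<subseteq> span (T - {x})" using T x by (intro span_mono) blast
    ultimately have "x \<in> span (T - {x})" by blast
    moreover have "independent (insert x (T - {x}))" using T x by (simp add: insert_absorb)
    ultimately show False using independent_insert[of x "T - {x}"] by simp
  qed
qed

lemma prod_tendsto0:
  fixes f :: "nat \<Rightarrow> real"
  assumes "0 \<le> g" "g < 1" "\<forall>j\<ge>1. 0 \<le> f j \<and> f j \<le> g"
  shows "(\<lambda>l. \<Prod>j=1..l. f j) \<longlonglongrightarrow> 0"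
proof (rule real_tendsto_sandwich)
  show "\<forall>\<^sub>F l in sequentially. 0 \<le> (\<Prod>j=1..l. f j)"
    using assms(3) by (intro always_eventually allI prod_nonneg) auto
  have "(\<Prod>j=1..l. f j) \<le> (\<Prod>j=1..l. g)" for l
    using assms(3) by (intro prod_mono) auto
  then show "\<forall>\<^sub>F l in sequentially. (\<Prod>j=1..l. f j) \<le> g ^ l"
    by (intro always_eventually allI) simp
  show "(\<lambda>l. 0::real) \<longlonglongrightarrow> 0" by simp
  show "(\<lambda>l. g ^ l) \<longlonglongrightarrow> 0" using assms by (intro LIMSEQ_power_zero) simp
qed

lemma inner_transpose: "(transpose A *v (v::real^'n)) \<bullet> z = v \<bullet> (A *v z)"
  by (simp add: dot_lmul_matrix)


lemma ws_part:
  fixes A :: "real^'d^'n" and b :: "real^'n" and xstar :: "real^'d"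
    and W :: "(real^'n) set" and w :: "(real^'n) pmf" and N :: nat
  assumes sol: "A *v xstar = b"
    and finW: "finite W" and cardW: "card W = N" and Npos: "0 < N"
    and nz: "\<forall>v\<in>W. transpose A *v v \<noteq> 0"
    and Ndef: "nullsp A w = {z. \<forall>v\<in>W. z \<bullet> (transpose A *v v) = 0}"
    and Rdef: "orth_comp (nullsp A w) = span ((\<lambda>v. transpose A *v v) ` W)"
    and gS: "\<forall>S. S \<subseteq> (\<lambda>v. (1 / norm (transpose A *v v)) *\<^sub>R (transpose A *v v)) ` W \<and> Fmats S \<noteq> {}
               \<longrightarrow> 1 - Min (gram_det ` Fmats S) \<le> g"
    and g0: "0 \<le> g"
    and bp: "block_perm N W ws"
  shows "(\<forall>l\<ge>1. tau A ws (orth_comp (nullsp A w)) l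
                     \<le> tau A ws (orth_comp (nullsp A w)) (l - 1) + enat (2 * N))
     \<and> (\<forall>j\<ge>1. 0 \<le> gamma A ws (orth_comp (nullsp A w)) j \<and> gamma A ws (orth_comp (nullsp A w)) j \<le> g)
     \<and> (\<forall>x0 l. (norm (kacz A b ws x0 (2 * N * l) - xstar
                              - proj (nullsp A w) (x0 - xstar)))^2
                        \<le> g ^ l * (norm (proj (orth_comp (nullsp A w)) (x0 - xstar)))^2)"
proof -
  define R where "R = orth_comp (nullsp A w)"
  define U where "U = (\<lambda>v. transpose A *v v) ` W"
  define nv where "nv = (\<lambda>v. (1 / norm (transpose A *v v)) *\<^sub>R (transpose A *v v))"
  define u where "u = (\<lambda>i. nv (ws i))"
  have RU: "R = span U" using Rdef by (simp add: R_def U_def)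
  have wsW: "ws i \<in> W" for i
  proof -
    have "bij_betw (\<lambda>j. ws ((i div N) * N + j)) {..<N} W" using bp by (simp add: block_perm_def)
    from bij_betwE[OF this] have "\<forall>j\<in>{..<N}. ws ((i div N) * N + j) \<in> W" .
    hence "ws ((i div N) * N + i mod N) \<in> W" using Npos by (meson lessThan_iff mod_less_divisor)
    thus "ws i \<in> W" by (simp only: div_mult_mod_eq)
  qed
  have cover: "U \<subseteq> (\<lambda>i. transpose A *v ws i) ` {q*N..<q*N+N}" for q
  proof
    fix x assume "x \<in> U"
    then obtain v where v: "v \<in> W" "x = transpose A *v v" by (auto simp: U_def)
    have "bij_betw (\<lambda>j. ws (q * N + j)) {..<N} W" using bp by (simp add: block_perm_def)
    hence "W = (\<lambda>j. ws (q * N + j)) ` {..<N}" by (simp add: bij_betw_def)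
    with v obtain j where j: "j < N" "v = ws (q * N + j)" by auto
    have "q * N + j \<in> {q*N..<q*N+N}" using j(1) by simp
    moreover have "x = transpose A *v ws (q * N + j)" using v j by simp
    ultimately show "x \<in> (\<lambda>i. transpose A *v ws i) ` {q*N..<q*N+N}" by (rule rev_image_eqI)
  qed
  have spans: "spans_from A ws R s k" if "s \<le> q*N" "q*N+N \<le> Suc k" for q s k
  proof -
    have h1: "(\<lambda>i. transpose A *v ws i) ` {s..k} \<subseteq> U" using wsW by (auto simp: U_def)
    have "{q*N..<q*N+N} \<subseteq> {s..k}"
    proof
      fix x assume "x \<in> {q*N..<q*N+N}"
      then show "x \<in> {s..k}" using that by (simp only: atLeastLessThan_iff atLeastAtMost_iff) linarith
    qed
    hence h2: "(\<lambda>i. transpose A *v ws i) ` {q*N..<q*N+N} \<subseteq> (\<lambda>i. transpose A *v ws i) ` {s..k}"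
      by (rule image_mono)
    have "(\<lambda>i. transpose A *v ws i) ` {s..k} = U"
      by (rule subset_antisym[OF h1 order_trans[OF cover h2]])
    then show ?thesis by (simp add: spans_from_def RU)
  qed
  have t1: "\<exists>t. tau A ws R (Suc 0) = enat t \<and> spans_from A ws R 0 t \<and> Suc t \<le> N"
  proof -
    have P: "spans_from A ws R 0 (N - 1)" by (rule spans[of 0 0]) (use Npos in auto)
    hence ex: "\<exists>k. spans_from A ws R 0 k" by blast
    let ?t = "LEAST k. spans_from A ws R 0 k"
    have "tau A ws R (Suc 0) = enat ?t" using ex by simp
    moreover have "spans_from A ws R 0 ?t" using P by (rule LeastI)
    moreover have "?t \<le> N - 1" using P by (rule Least_le)
    ultimately show ?thesis using Npos by (intro exI[of _ ?t]) auto
  qed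
  have t2: "\<exists>t'. tau A ws R (Suc (Suc l)) = enat t' \<and> t < t' \<and> spans_from A ws R (Suc t) t' \<and> Suc t' \<le> Suc t + 2*N"
    if tl: "tau A ws R (Suc l) = enat t" for l t
  proof -
    define m where "m = t div N * N"
    have dm: "t div N * N + t mod N = t" by (rule div_mult_mod_eq)
    have mN: "t mod N < N" using Npos by (rule mod_less_divisor)
    have tm: "m \<le> t" "t < m + N" unfolding m_def using dm mN by linarith+
    define k0 where "k0 = m + 2*N - 1"
    have m1: "(t div N + 1) * N = m + N" by (simp add: m_def algebra_simps)
    have q1: "Suc t \<le> (t div N + 1) * N" unfolding m1 using tm by simp
    have q2: "(t div N + 1) * N + N \<le> Suc k0" unfolding m1 k0_def using Npos by simp
    have P: "t < k0 \<and> spans_from A ws R (Suc t) k0"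
      using spans[OF q1 q2] tm Npos by (simp add: k0_def)
    hence ex: "\<exists>k>t. spans_from A ws R (Suc t) k" by blast
    let ?t = "LEAST k. t < k \<and> spans_from A ws R (Suc t) k"
    have "tau A ws R (Suc (Suc l)) = enat ?t" using ex tl by simp
    moreover have "t < ?t \<and> spans_from A ws R (Suc t) ?t" using P by (rule LeastI)
    moreover have "?t \<le> k0" using P by (rule Least_le)
    ultimately show ?thesis using tm Npos by (intro exI[of _ ?t]) (auto simp: k0_def)
  qed
  note tau.simps[simp del]
  define e where "e = (\<lambda>l. if l = 0 then 0 else Suc (the_enat (tau A ws R l)))"
  have E: "\<exists>t. tau A ws R (Suc l) = enat t \<and> e (Suc l) = Suc t \<and> e l \<le> t \<and> Suc t \<le> e l + 2*N
            \<and> spans_from A ws R (e l) t" for l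
  proof (induction l)
    case 0
    obtain t where t: "tau A ws R (Suc 0) = enat t" "spans_from A ws R 0 t" "Suc t \<le> N" using t1 by blast
    then show ?case by (intro exI[of _ t]) (simp add: e_def)
  next
    case (Suc l)
    then obtain t where t: "tau A ws R (Suc l) = enat t" "e (Suc l) = Suc t" by blast
    from t2[OF t(1)] obtain t' where "tau A ws R (Suc (Suc l)) = enat t'" "t < t'"
      "spans_from A ws R (Suc t) t'" "Suc t' \<le> Suc t + 2*N" by blast
    then show ?case using t by (intro exI[of _ t']) (auto simp: e_def)
  qed
  have claim1: "\<forall>l\<ge>1. tau A ws R l \<le> tau A ws R (l - 1) + enat (2 * N)"
  proof (intro allI impI)
    fix l :: nat assume "1 \<le> l"
    then obtain l' where l: "l = Suc l'" by (cases l) auto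
    obtain t where t: "tau A ws R (Suc l') = enat t" "Suc t \<le> e l' + 2*N" using E[of l'] by blast
    show "tau A ws R l \<le> tau A ws R (l - 1) + enat (2 * N)"
    proof (cases l')
      case 0
      then show ?thesis using t l by (simp add: e_def tau.simps(1))
    next
      case (Suc l'')
      obtain t'' where "tau A ws R (Suc l'') = enat t''" "e (Suc l'') = Suc t''" using E[of l''] by blast
      then show ?thesis using t l Suc by simp
    qed
  qed
  define L where "L = (\<lambda>l. map u [e l..<e (Suc l)])"
  have nvW: "norm (nv v) = 1" if "v \<in> W" for v
    using nz that by (simp add: nv_def)
  have unitL: "\<forall>x\<in>set (L l). norm x = 1" for l
    using nvW wsW by (auto simp: L_def u_def)
  have setL: "normcols A ws R (Suc l) = set (L l)" for l
  proof -
    obtain t where t: "tau A ws R (Suc l) = enat t" "e (Suc l) = Suc t" using E[of l] by blast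
    have s: "(if Suc l = 1 then 0 else Suc (the_enat (tau A ws R (Suc l - 1)))) = e l"
      by (cases l) (auto simp: e_def)
    have "{i. e l \<le> i \<and> enat i \<le> tau A ws R (Suc l)} = {e l..<e (Suc l)}" using t by auto
    then show ?thesis unfolding normcols_def Let_def s by (simp add: L_def u_def nv_def)
  qed
  have spanL: "span (set (L l)) = R" for l
  proof -
    obtain t where t: "e (Suc l) = Suc t" "spans_from A ws R (e l) t" using E[of l] by blast
    have "set (L l) = (\<lambda>x. (1 / norm x) *\<^sub>R x) ` ((\<lambda>i. transpose A *v ws i) ` {e l..t})"
      using t by (auto simp: L_def u_def nv_def image_image atLeastLessThanSuc_atLeastAtMost)
    also have "span \<dots> = span ((\<lambda>i. transpose A *v ws i) ` {e l..t})"
      by (rule span_image_scale) (use nz wsW in auto)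
    also have "\<dots> = R" using t by (simp add: spans_from_def)
    finally show ?thesis .
  qed
  have finV: "finite (nv ` W)" using finW by simp
  have gam: "1 - gram_det (greedy (L l)) \<le> gamma A ws R (Suc l) \<and> 0 \<le> gamma A ws R (Suc l) \<and> gamma A ws R (Suc l) \<le> g" for l
  proof -
    let ?S = "normcols A ws R (Suc l)"
    have GF: "greedy (L l) \<in> Fmats ?S" using greedy_Fmats[of "L l"] setL by simp
    have SV: "?S \<subseteq> nv ` W" using wsW by (auto simp: setL L_def u_def)
    have finS: "finite (Fmats ?S)"
      by (rule finite_subset[OF _ finite_subset_distinct[of ?S]]) (auto simp: Fmats_def setL)
    have mn: "Min (gram_det ` Fmats ?S) \<le> gram_det (greedy (L l))"
      using finS GF by simp
    have le1: "gram_det (greedy (L l)) \<le> 1" using greedy_bounds[OF unitL] by blast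
    have "1 - Min (gram_det ` Fmats ?S) \<le> g" using gS SV GF by (auto simp: nv_def)
    then show ?thesis using mn le1 by (simp add: gamma_def)
  qed
  have claim2: "\<forall>j\<ge>1. 0 \<le> gamma A ws R j \<and> gamma A ws R j \<le> g"
  proof (intro allI impI)
    fix j :: nat assume "1 \<le> j"
    then obtain l where "j = Suc l" by (cases j) auto
    then show "0 \<le> gamma A ws R j \<and> gamma A ws R j \<le> g" using gam[of l] by simp
  qed
  have claim3: "(norm (kacz A b ws x0 (2 * N * l) - xstar - proj (nullsp A w) (x0 - xstar)))^2
                 \<le> g ^ l * (norm (proj R (x0 - xstar)))^2" for x0 l
  proof -
    define y0 where "y0 = x0 - xstar"
    obtain p where p: "p \<in> span U" "\<forall>x\<in>span U. (y0 - p) \<bullet> x = 0" using orth_decomp by blast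
    define n0 where "n0 = y0 - p"
    have n0U: "n0 \<bullet> x = 0" if "x \<in> span U" for x using p that by (simp add: n0_def)
    have n0N: "n0 \<in> nullsp A w" using n0U by (simp add: Ndef U_def span_base)
    have projN: "proj (nullsp A w) y0 = n0"
    proof (rule proj_unique)
      show "subspace (nullsp A w)" by (simp add: nullsp_def subspace_span)
      show "n0 \<in> nullsp A w" by (rule n0N)
      show "\<forall>z\<in>nullsp A w. (y0 - n0) \<bullet> z = 0"
      proof
        fix z assume "z \<in> nullsp A w"
        hence "\<forall>x\<in>U. z \<bullet> x = 0" by (auto simp: Ndef U_def)
        hence "z \<bullet> p = 0" using orth_span p(1) by blast
        thus "(y0 - n0) \<bullet> z = 0" by (simp add: n0_def inner_commute)
      qed
    qed
    have projR: "proj R y0 = p"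
    proof (rule proj_unique)
      show "subspace R" by (simp add: RU subspace_span)
      show "p \<in> R" using p(1) by (simp add: RU)
      show "\<forall>y\<in>R. (y0 - p) \<bullet> y = 0" using p(2) by (simp add: RU)
    qed
    define r where "r = (\<lambda>k. kacz A b ws x0 k - xstar - n0)"
    have r0: "r 0 = p" by (simp add: r_def n0_def y0_def)
    have aU0: "transpose A *v ws k \<in> U" for k unfolding U_def by (rule imageI) (rule wsW)
    have uU: "u k \<in> span U" for k
      unfolding u_def nv_def by (intro span_scale span_base aU0)
    have uunit: "norm (u k) = 1" for k using nvW wsW by (simp add: u_def)
    have rstep: "r (Suc k) = r k - (u k \<bullet> r k) *\<^sub>R u k" for k
    proof -
      define a where "a = transpose A *v ws k"
      define xk where "xk = kacz A b ws x0 k"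
      have a0: "a \<noteq> 0" using nz wsW by (simp add: a_def)
      have aU: "a \<in> span U" unfolding a_def by (intro span_base aU0)
      have "ws k \<bullet> (b - A *v xk) = a \<bullet> (xstar - xk)"
        by (simp add: a_def dot_lmul_matrix sol[symmetric] matrix_vector_mult_diff_distrib)
      also have "xstar - xk = - (r k + n0)" by (simp add: r_def xk_def)
      also have "a \<bullet> (- (r k + n0)) = - (a \<bullet> r k)"
        using n0U[OF aU] by (simp add: inner_diff_right inner_minus_right inner_commute)
      finally have co: "ws k \<bullet> (b - A *v xk) = - (a \<bullet> r k)" .
      have ua: "u k = (1 / norm a) *\<^sub>R a" by (simp add: u_def nv_def a_def)
      have "(u k \<bullet> r k) *\<^sub>R u k = ((a \<bullet> r k) / (norm a)^2) *\<^sub>R a"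
        using a0 unfolding ua by (simp add: power2_eq_square)
      moreover have "r (Suc k) = r k + (- (a \<bullet> r k) / (norm a)^2) *\<^sub>R a"
        using co by (simp add: r_def xk_def a_def algebra_simps)
      ultimately show ?thesis by (simp add: algebra_simps)
    qed
    have rspan: "r k \<in> span U" for k
      by (induction k) (auto simp: r0 p rstep intro!: span_diff span_scale uU)
    have rsweep: "r (s + m) = sweep (map u [s..<s+m]) (r s)" for s m
    proof (induction m)
      case (Suc m)
      have "r (s + Suc m) = r (s + m) - (u (s + m) \<bullet> r (s + m)) *\<^sub>R u (s + m)"
        by (simp add: rstep)
      also have "\<dots> = sweep [u (s + m)] (r (s + m))" by simp
      also have "\<dots> = sweep (map u [s..<s+m] @ [u (s+m)]) (r s)" by (simp add: sweep_append Suc)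
      finally show ?case by simp
    qed simp
    have rmono: "norm (r (Suc k)) \<le> norm (r k)" for k
      using sweep_norm_le[of "[u k]" "r k"] uunit by (simp add: rstep)
    have block: "(norm (r (e (Suc l))))^2 \<le> g * (norm (r (e l)))^2" for l
    proof -
      obtain t where t: "e (Suc l) = Suc t" "e l \<le> t" using E[of l] by blast
      have "r (e (Suc l)) = r (e l + (e (Suc l) - e l))" using t by simp
      also have "\<dots> = sweep (L l) (r (e l))" unfolding rsweep using t by (simp add: L_def)
      finally have eq: "r (e (Suc l)) = sweep (L l) (r (e l))" .
      have "r (e l) \<in> span (set (L l))" using rspan spanL RU by simp
      hence "(norm (sweep (L l) (r (e l))))^2 \<le> (1 - gram_det (greedy (L l))) * (norm (r (e l)))^2"
        by (rule sweep_bound[OF unitL])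
      also have "\<dots> \<le> g * (norm (r (e l)))^2"
        using gam[of l] by (intro mult_right_mono) auto
      finally show ?thesis using eq by simp
    qed
    have geo: "(norm (r (e l)))^2 \<le> g ^ l * (norm (r 0))^2" for l
    proof (induction l)
      case 0
      then show ?case by (simp add: e_def)
    next
      case (Suc l)
      have "(norm (r (e (Suc l))))^2 \<le> g * (norm (r (e l)))^2" by (rule block)
      also have "\<dots> \<le> g * (g ^ l * (norm (r 0))^2)" using Suc g0 by (intro mult_left_mono)
      finally show ?case by simp
    qed
    have el: "e l \<le> 2 * N * l" for l
    proof (induction l)
      case 0
      then show ?case by (simp add: e_def)
    next
      case (Suc l)
      obtain t where "e (Suc l) = Suc t" "Suc t \<le> e l + 2*N" using E[of l] by blast
      then show ?case using Suc by simp
    qed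
    have "norm (r (2 * N * l)) \<le> norm (r (e l))"
      using lift_Suc_antimono_le[of "\<lambda>k. norm (r k)", OF rmono el] .
    hence "(norm (r (2 * N * l)))^2 \<le> (norm (r (e l)))^2" by (intro power_mono) auto
    also have "\<dots> \<le> g ^ l * (norm (r 0))^2" by (rule geo)
    finally have fin: "(norm (r (2 * N * l)))^2 \<le> g ^ l * (norm (r 0))^2" .
    have pN: "proj (nullsp A w) (x0 - xstar) = n0" using projN by (simp add: y0_def)
    have pR: "proj R (x0 - xstar) = r 0" using projR r0 by (simp add: y0_def)
    show ?thesis unfolding pN pR using fin by (simp add: r_def)
  qed
  show ?thesis using claim1 claim2 claim3 by (simp add: R_def)
qed

theorem mainTheorem14:
  fixes A :: "real^'d^'n" and b :: "real^'n" and xstar :: "real^'d"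
    and W :: "(real^'n) set" and w :: "(real^'n) pmf" and N :: nat
  assumes sol: "A *v xstar = b"
    and finW: "finite W" and cardW: "card W = N"
    and pos: "\<forall>v\<in>W. pmf w v > 0"
    and sum1: "(\<Sum>v\<in>W. pmf w v) = 1"
    and nz: "\<forall>v\<in>W. transpose A *v v \<noteq> 0"
  shows "(\<forall>ws. block_perm N W ws \<longrightarrow>
            (\<forall>l\<ge>1. tau A ws (orth_comp (nullsp A w)) l
                     \<le> tau A ws (orth_comp (nullsp A w)) (l - 1) + enat (2 * N)) \<and>
            (\<lambda>l. \<Prod>j=1..l. gamma A ws (orth_comp (nullsp A w)) j) \<longlonglongrightarrow> 0)
       \<and> (\<exists>g::real. 0 \<le> g \<and> g < 1 \<and>
            (\<forall>ws. block_perm N W ws \<longrightarrow>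
               (\<forall>j\<ge>1. gamma A ws (orth_comp (nullsp A w)) j \<le> g) \<and>
               (\<forall>x0 l. (norm (kacz A b ws x0 (2 * N * l) - xstar
                              - proj (nullsp A w) (x0 - xstar)))^2
                        \<le> g ^ l * (norm (proj (orth_comp (nullsp A w)) (x0 - xstar)))^2)))"
proof -
  let ?R = "orth_comp (nullsp A w)"
  define U where "U = (\<lambda>v. transpose A *v v) ` W"
  define nv where "nv = (\<lambda>v. (1 / norm (transpose A *v v)) *\<^sub>R (transpose A *v v))"
  have Wne: "W \<noteq> {}" using sum1 by auto
  have Npos: "0 < N" using cardW finW Wne card_gt_0_iff by blast
  have setpmf: "set_pmf w = W"
  proof
    show "W \<subseteq> set_pmf w" using pos by (auto simp: set_pmf_iff)
    show "set_pmf w \<subseteq> W"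
    proof
      fix v assume v: "v \<in> set_pmf w"
      show "v \<in> W"
      proof (rule ccontr)
        assume nv: "v \<notin> W"
        have "measure_pmf.prob w (insert v W) = sum (pmf w) (insert v W)"
          using finW by (simp add: measure_measure_pmf_finite)
        also have "\<dots> = pmf w v + 1" using finW nv sum1 by simp
        finally have "measure_pmf.prob w (insert v W) = pmf w v + 1" .
        moreover have "pmf w v > 0" using v by (simp add: pmf_positive)
        moreover have "measure_pmf.prob w (insert v W) \<le> 1" by (rule measure_pmf.prob_le_1)
        ultimately show False by simp
      qed
    qed
  qed
  have probiff: "measure_pmf.prob w {v. z \<bullet> (transpose A *v v) = 0} = 1 \<longleftrightarrow> (\<forall>v\<in>W. z \<bullet> (transpose A *v v) = 0)" for z
    by (subst measure_pmf.prob_eq_1) (auto simp: AE_measure_pmf_iff setpmf)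
  have sub: "subspace {z. \<forall>v\<in>W. z \<bullet> (transpose A *v v) = 0}"
    by (auto simp: subspace_def inner_add_left)
  have Ndef: "nullsp A w = {z. \<forall>v\<in>W. z \<bullet> (transpose A *v v) = 0}"
    unfolding nullsp_def probiff using sub by (simp add: span_eq_iff)
  have Rdef: "?R = span ((\<lambda>v. transpose A *v v) ` W)"
  proof
    show "span ((\<lambda>v. transpose A *v v) ` W) \<subseteq> ?R"
    proof
      fix x assume x: "x \<in> span ((\<lambda>v. transpose A *v v) ` W)"
      show "x \<in> ?R" unfolding orth_comp_def
      proof (intro CollectI ballI)
        fix z assume "z \<in> nullsp A w"
        hence "\<forall>y\<in>(\<lambda>v. transpose A *v v) ` W. z \<bullet> y = 0" by (auto simp: Ndef)
        hence "z \<bullet> x = 0" using orth_span x by blast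
        thus "x \<bullet> z = 0" by (simp add: inner_commute)
      qed
    qed
    show "?R \<subseteq> span ((\<lambda>v. transpose A *v v) ` W)"
    proof
      fix x assume x: "x \<in> ?R"
      obtain p where p: "p \<in> span ((\<lambda>v. transpose A *v v) ` W)"
        "\<forall>y\<in>span ((\<lambda>v. transpose A *v v) ` W). (x - p) \<bullet> y = 0" using orth_decomp by blast
      have "(x - p) \<bullet> (transpose A *v v) = 0" if "v \<in> W" for v
      proof -
        have "transpose A *v v \<in> span ((\<lambda>v. transpose A *v v) ` W)"
          by (rule span_base, rule imageI, rule that)
        thus ?thesis using p(2) by blast
      qed
      hence "x - p \<in> nullsp A w" unfolding Ndef by blast
      hence "x \<bullet> (x - p) = 0" using x by (simp add: orth_comp_def)
      moreover have "p \<bullet> (x - p) = 0" using p by (simp add: inner_commute)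
      ultimately have "(x - p) \<bullet> (x - p) = 0" by (simp add: inner_diff_left)
      hence "x = p" by simp
      thus "x \<in> span ((\<lambda>v. transpose A *v v) ` W)" using p(1) by simp
    qed
  qed
  define SS where "SS = {S. S \<subseteq> nv ` W \<and> Fmats S \<noteq> {}}"
  define f where "f = (\<lambda>S::(real^'d) set. 1 - Min (gram_det ` Fmats S))"
  define g where "g = Max (insert 0 (f ` SS))"
  have finSS: "finite SS" using finW unfolding SS_def
    by (rule_tac finite_subset[of _ "Pow (nv ` W)"]) auto
  have g0: "0 \<le> g" unfolding g_def using finSS by simp
  have fS: "f S < 1" if "S \<in> SS" for S
  proof -
    have SV: "S \<subseteq> nv ` W" and ne: "Fmats S \<noteq> {}" using that by (auto simp: SS_def)
    have finS: "finite S" using SV finW finite_subset by blast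
    have fin: "finite (Fmats S)"
      by (rule finite_subset[OF _ finite_subset_distinct[OF finS]]) (auto simp: Fmats_def)
    have unit: "norm x = 1" if "x \<in> S" for x
      using SV that nz by (auto simp: nv_def)
    have "\<forall>F\<in>Fmats S. 0 < gram_det F"
    proof
      fix F assume "F \<in> Fmats S"
      hence "independent (set F)" "distinct F" "\<forall>v\<in>set F. norm v = 1"
        using unit by (auto simp: Fmats_def)
      thus "0 < gram_det F" using gram_det_bounds by blast
    qed
    hence "0 < Min (gram_det ` Fmats S)" using fin ne by simp
    thus ?thesis by (simp add: f_def)
  qed
  have g1: "g < 1" unfolding g_def using finSS fS by simp
  have gS: "\<forall>S. S \<subseteq> (\<lambda>v. (1 / norm (transpose A *v v)) *\<^sub>R (transpose A *v v)) ` W \<and> Fmats S \<noteq> {}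
               \<longrightarrow> 1 - Min (gram_det ` Fmats S) \<le> g"
  proof (intro allI impI)
    fix S assume "S \<subseteq> (\<lambda>v. (1 / norm (transpose A *v v)) *\<^sub>R (transpose A *v v)) ` W \<and> Fmats S \<noteq> {}"
    hence "S \<in> SS" by (simp add: SS_def nv_def)
    hence "f S \<le> g" unfolding g_def using finSS by simp
    thus "1 - Min (gram_det ` Fmats S) \<le> g" by (simp add: f_def)
  qed
  note WP = ws_part[OF sol finW cardW Npos nz Ndef Rdef gS g0]
  have part1: "block_perm N W ws \<Longrightarrow> (\<forall>l\<ge>1. tau A ws ?R l \<le> tau A ws ?R (l - 1) + enat (2 * N)) \<and>
            (\<lambda>l. \<Prod>j=1..l. gamma A ws ?R j) \<longlonglongrightarrow> 0" for ws
  proof -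
    assume bp: "block_perm N W ws"
    have "(\<lambda>l. \<Prod>j=1..l. gamma A ws ?R j) \<longlonglongrightarrow> 0"
      using WP[OF bp] g0 g1 by (intro prod_tendsto0[of g]) auto
    then show ?thesis using WP[OF bp] by blast
  qed
  have part2: "block_perm N W ws \<Longrightarrow> (\<forall>j\<ge>1. gamma A ws ?R j \<le> g) \<and>
               (\<forall>x0 l. (norm (kacz A b ws x0 (2 * N * l) - xstar
                              - proj (nullsp A w) (x0 - xstar)))^2
                        \<le> g ^ l * (norm (proj ?R (x0 - xstar)))^2)" for ws
    using WP by blast
  show ?thesis using part1 part2 g0 g1 by blast
qed

end
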